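(* There exists a family of finite sets $u^{\alpha}_n\subseteq\omega_1$, indexed by $\alpha<\omega_1$ and positive integers $n$, such that for all $\alpha<\omega_1$ and all $n\geq 1$: (i) $|u^{\alpha}_n|<n+1$; (ii) $\alpha\in u^{\alpha}_n\subseteq u^{\alpha}_{n+1}$; (iii) $\bigcup_n u^{\alpha}_n=\alpha+1$ (i.e. $=\{\beta:\beta\le\alpha\}$); (iv) if $\beta\in u^{\alpha}_n$ then $u^{\beta}_n=u^{\alpha}_n\cap(\beta+1)$; (v) $\lim_{n\to\infty}\frac{|u^{\alpha}_n|}{n+1}=0$.
   Context: $\omega_1$ is the first uncountable ordinal; ordinals are identified with the set of smaller ordinals, so $\beta+1=\{\gamma:\gamma\le\beta\}$. *)

theory Defs
  imports Complex_Main "HOL-Library.Countable_Set"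
begin

text \<open>omega_1 is represented abstractly: any well-ordered type that is uncountable
  but all of whose proper initial segments are countable is order-isomorphic to omega_1.
  Ordinals below omega_1 are the elements of this type; beta+1 = {gamma. gamma <= beta}.\<close>

end

theory Submission
  imports Defs
begin

definition Inv :: "('a::wellorder \<Rightarrow> nat \<Rightarrow> 'a set) \<Rightarrow> 'a \<Rightarrow> bool" where
  "Inv u \<alpha> \<longleftrightarrow> (\<forall>n\<ge>1.
        finite (u \<alpha> n) \<and>
        card (u \<alpha> n) < n + 1 \<and>
        \<alpha> \<in> u \<alpha> n \<and> u \<alpha> n \<subseteq> u \<alpha> (Suc n) \<and>
        (\<forall>\<beta>\<in>u \<alpha> n. u \<beta> n = u \<alpha> n \<inter> {\<gamma>. \<gamma> \<le> \<beta>})) \<and>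
      (\<Union>n\<in>{1..}. u \<alpha> n) = {\<beta>. \<beta> \<le> \<alpha>} \<and>
      (\<lambda>n. real (card (u \<alpha> n)) / real (n + 1)) \<longlonglongrightarrow> 0"

definition gam :: "'a::wellorder \<Rightarrow> nat \<Rightarrow> 'a" where
  "gam \<alpha> k = Max (from_nat_into {x. x < \<alpha>} ` {..k})"

definition okk :: "('a \<Rightarrow> nat \<Rightarrow> 'a set) \<Rightarrow> (nat \<Rightarrow> 'a) \<Rightarrow> nat \<Rightarrow> nat \<Rightarrow> bool" where
  "okk g c k N \<longleftrightarrow> (\<forall>n\<ge>N. (card (g (c k) n) + 1) * (k + 1) \<le> n)"

fun st :: "('a \<Rightarrow> nat \<Rightarrow> 'a set) \<Rightarrow> (nat \<Rightarrow> 'a) \<Rightarrow> nat \<Rightarrow> nat option" where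
  "st g c 0 = None"
| "st g c (Suc n) = (case st g c n of
      None \<Rightarrow> (if okk g c 0 (Suc n) then Some 0 else None)
    | Some k \<Rightarrow> (if okk g c (Suc k) (Suc n) \<and> c k \<in> g (c (Suc k)) (Suc n)
                then Some (Suc k) else Some k))"

definition H0 :: "('a::wellorder \<Rightarrow> nat \<Rightarrow> 'a set) \<Rightarrow> 'a \<Rightarrow> nat \<Rightarrow> 'a set" where
  "H0 g' \<alpha> = (\<lambda>n. case st g' (gam \<alpha>) n of None \<Rightarrow> {\<alpha>} | Some k \<Rightarrow> insert \<alpha> (g' (gam \<alpha> k) n))"

definition H :: "('a::wellorder \<Rightarrow> nat \<Rightarrow> 'a set) \<Rightarrow> 'a \<Rightarrow> nat \<Rightarrow> 'a set" where
  "H g \<alpha> = H0 (\<lambda>\<beta>. if \<beta> < \<alpha> then g \<beta> else (\<lambda>_. {})) \<alpha>"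

lemma gam_props:
  fixes \<alpha> :: "'a::wellorder"
  assumes "b0 < \<alpha>" "countable {x. x < \<alpha>}"
  shows "gam \<alpha> k < \<alpha>" "gam \<alpha> k \<le> gam \<alpha> (Suc k)" "\<beta> < \<alpha> \<Longrightarrow> \<exists>j. \<beta> \<le> gam \<alpha> j"
proof -
  let ?S = "{x. x < \<alpha>}"
  let ?e = "from_nat_into ?S"
  have ne: "?S \<noteq> {}" using assms by auto
  have fin: "finite (?e ` {..k})" for k by simp
  have ne2: "?e ` {..k} \<noteq> {}" for k by auto
  have "gam \<alpha> k \<in> ?e ` {..k}" unfolding gam_def using Max_in[OF fin ne2] .
  then show "gam \<alpha> k < \<alpha>" using from_nat_into[OF ne] by auto
  show "gam \<alpha> k \<le> gam \<alpha> (Suc k)" unfolding gam_def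
    by (rule Max_mono) (auto)
  assume "\<beta> < \<alpha>"
  then have "\<beta> \<in> range ?e" using range_from_nat_into[OF ne assms(2)] by auto
  then obtain j where "\<beta> = ?e j" by auto
  then have "\<beta> \<le> gam \<alpha> j" unfolding gam_def by (intro Max_ge) auto
  then show "\<exists>j. \<beta> \<le> gam \<alpha> j" ..
qed

lemma okk_mono: "okk g c k N \<Longrightarrow> N \<le> N' \<Longrightarrow> okk g c k N'"
  unfolding okk_def by auto

lemma okk_cong: "(\<And>k. g1 (c k) = g2 (c k)) \<Longrightarrow> okk g1 c k N = okk g2 c k N"
  unfolding okk_def by simp

lemma st_cong:
  assumes "\<And>k. g1 (c k) = g2 (c k)" shows "st g1 c n = st g2 c n"
proof -
  have ok: "okk g1 c k N = okk g2 c k N" for k N using okk_cong[of g1 c g2, OF assms] .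
  show ?thesis by (induction n) (simp_all only: st.simps ok assms)
qed

lemma st_ok: "st g c n = Some k \<Longrightarrow> okk g c k n \<and> n \<ge> 1"
proof (induction n arbitrary: k)
  case 0 then show ?case by simp
next
  case (Suc n)
  show ?case
  proof (cases "st g c n")
    case None with Suc.prems show ?thesis by (auto split: if_splits)
  next
    case (Some j)
    show ?thesis
    proof (cases "okk g c (Suc j) (Suc n) \<and> c j \<in> g (c (Suc j)) (Suc n)")
      case True
      then show ?thesis using Suc.prems Some by simp
    next
      case False
      then have "st g c (Suc n) = Some j" using Some by (simp del: de_Morgan_conj)
      then have "k = j" using Suc.prems by simp
      then have "okk g c k n" using Suc.IH Some by blast
      then show ?thesis using okk_mono[of g c k n "Suc n"] by simp
    qed
  qed
qed

lemma st_step: "st g c n = Some k \<Longrightarrow> st g c (Suc n) = Some k \<or>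
   (st g c (Suc n) = Some (Suc k) \<and> c k \<in> g (c (Suc k)) (Suc n))"
  by auto

lemma st_later: "st g c n = Some k \<Longrightarrow> n \<le> m \<Longrightarrow> \<exists>k'\<ge>k. st g c m = Some k'"
proof (induction m)
  case 0 then show ?case by auto
next
  case (Suc m)
  show ?case
  proof (cases "n = Suc m")
    case True with Suc show ?thesis by auto
  next
    case False
    with Suc obtain k' where "k' \<ge> k" "st g c m = Some k'" by fastforce
    then have "st g c (Suc m) = Some k' \<or> st g c (Suc m) = Some (Suc k')"
      using st_step[of g c m k'] by blast
    then show ?thesis using \<open>k' \<ge> k\<close> le_SucI by blast
  qed
qed

lemma Inv_mono: "Inv g b \<Longrightarrow> 1 \<le> n \<Longrightarrow> n \<le> m \<Longrightarrow> g b n \<subseteq> g b m"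
proof (induction m)
  case 0 then show ?case by simp
next
  case (Suc m)
  show ?case
  proof (cases "n = Suc m")
    case True then show ?thesis by simp
  next
    case False
    with Suc have "g b n \<subseteq> g b m" "1 \<le> m" by auto
    moreover have "g b m \<subseteq> g b (Suc m)" using Suc.prems(1) \<open>1 \<le> m\<close> unfolding Inv_def by blast
    ultimately show ?thesis by blast
  qed
qed


lemma okk_exists:
  assumes "Inv g (c k)" shows "\<exists>N\<ge>1. okk g c k N"
proof -
  have lim: "(\<lambda>n. real (card (g (c k) n)) / real (n + 1)) \<longlonglongrightarrow> 0"
    using assms unfolding Inv_def by blast
  have pos: "(0::real) < 1 / (4 * (real k + 1))" by simp
  from lim[unfolded lim_sequentially, rule_format, OF pos] obtain N0 where
    N0: "\<forall>n\<ge>N0. dist (real (card (g (c k) n)) / real (n + 1)) 0 < 1 / (4 * (real k + 1))" by blast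
  define N where "N = max N0 (2 * k + 2)"
  have "okk g c k N" unfolding okk_def
  proof (intro allI impI)
    fix n assume "N \<le> n"
    then have "n \<ge> N0" "n \<ge> 2*k+2" unfolding N_def by auto
    define C where "C = real (card (g (c k) n))"
    have "C / real (n+1) < 1 / (4 * (real k + 1))" using N0 \<open>n \<ge> N0\<close> unfolding C_def by auto
    then have "C * (4 * (real k + 1)) < real (n+1)"
      by (simp add: field_simps)
    then have h1: "C * (real k + 1) * 4 < real n + 1" by (simp add: algebra_simps)
    have h2: "(real k + 1) * 2 \<le> real n" using \<open>n \<ge> 2*k+2\<close> by simp
    have "(C + 1) * (real k + 1) \<le> real n" using h1 h2 \<open>n \<ge> 2*k+2\<close> by (simp add: algebra_simps)
    moreover have "real ((card (g (c k) n) + 1) * (k + 1)) = (C + 1) * (real k + 1)" unfolding C_def by (simp add: algebra_simps)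
    ultimately have "real ((card (g (c k) n) + 1) * (k + 1)) \<le> real n" by simp
    then show "(card (g (c k) n) + 1) * (k + 1) \<le> n" by (simp only: of_nat_le_iff)
  qed
  then show ?thesis unfolding N_def by (intro exI[of _ N]) (auto simp: N_def)
qed

lemma mem_exists:
  assumes "Inv g b" "a \<le> b" shows "\<exists>N\<ge>1. \<forall>m\<ge>N. a \<in> g b m"
proof -
  have "a \<in> (\<Union>n\<in>{1..}. g b n)" using assms unfolding Inv_def by blast
  then obtain N where "N \<ge> 1" "a \<in> g b N" by auto
  then show ?thesis using Inv_mono[OF assms(1) \<open>N\<ge>1\<close>] by blast
qed

lemma st_unbounded:
  assumes inv: "\<And>k. Inv g (c k)" and mono: "\<And>k. c k \<le> c (Suc k)"
  shows "\<exists>n k. k \<ge> K \<and> st g c n = Some k"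
proof (induction K)
  case 0
  obtain N where "N \<ge> 1" "okk g c 0 N" using okk_exists[of g c 0, OF inv] by blast
  then obtain M where "N = Suc M" by (cases N) auto
  then have "st g c N \<noteq> None" using \<open>okk g c 0 N\<close> by (auto split: option.split)
  then show ?case by auto
next
  case (Suc K)
  then obtain n k where nk: "k \<ge> K" "st g c n = Some k" by blast
  show ?case
  proof (cases "k \<ge> Suc K")
    case True with nk show ?thesis by blast
  next
    case False
    then have kK: "k = K" using nk by simp
    obtain N1 where N1: "N1 \<ge> 1" "okk g c (Suc k) N1" using okk_exists[of g c "Suc k", OF inv] by blast
    obtain N2 where N2: "\<forall>m\<ge>N2. c k \<in> g (c (Suc k)) m" using mem_exists[OF inv mono] by blast
    define N where "N = max n (max N1 N2)"
    obtain j where j: "j \<ge> k" "st g c N = Some j" using st_later[OF nk(2), of N] unfolding N_def by auto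
    show ?thesis
    proof (cases "j = k")
      case False with j kK show ?thesis by (intro exI[of _ N] exI[of _ j]) auto
    next
      case True
      have "okk g c (Suc k) (Suc N)" using okk_mono[OF N1(2)] unfolding N_def by auto
      moreover have "c k \<in> g (c (Suc k)) (Suc N)" using N2 unfolding N_def by auto
      ultimately have "st g c (Suc N) = Some (Suc k)" using j True by simp
      then show ?thesis using kK by blast
    qed
  qed
qed


lemma Inv_le: "Inv g b \<Longrightarrow> 1 \<le> n \<Longrightarrow> x \<in> g b n \<Longrightarrow> x \<le> b"
  unfolding Inv_def by blast

lemma Inv_coh: "Inv g b \<Longrightarrow> 1 \<le> n \<Longrightarrow> x \<in> g b n \<Longrightarrow> g x n = g b n \<inter> {y. y \<le> x}"
  unfolding Inv_def by blast

lemma Inv_fin: "Inv g b \<Longrightarrow> 1 \<le> n \<Longrightarrow> finite (g b n)"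
  unfolding Inv_def by blast

lemma Inv_self: "Inv g b \<Longrightarrow> 1 \<le> n \<Longrightarrow> b \<in> g b n"
  unfolding Inv_def by blast

lemma Inv_union: "Inv g b \<Longrightarrow> x \<le> b \<Longrightarrow> \<exists>n\<ge>1. x \<in> g b n"
  unfolding Inv_def by blast

lemma step_A:
  fixes u :: "'a::wellorder \<Rightarrow> nat \<Rightarrow> 'a set"
  assumes fx: "\<And>n. u \<alpha> n = (case st u (gam \<alpha>) n of None \<Rightarrow> {\<alpha>} | Some k \<Rightarrow> insert \<alpha> (u (gam \<alpha> k) n))"
    and IH: "\<And>\<beta>. \<beta> < \<alpha> \<Longrightarrow> Inv u \<beta>" and b0: "b0 < \<alpha>" and cnt: "countable {x. x < \<alpha>}"
  shows "Inv u \<alpha>"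
proof -
  define c where "c = gam \<alpha>"
  have fx': "u \<alpha> n = (case st u c n of None \<Rightarrow> {\<alpha>} | Some k \<Rightarrow> insert \<alpha> (u (c k) n))" for n
    using fx unfolding c_def .
  have clt: "c k < \<alpha>" for k unfolding c_def using gam_props[OF b0 cnt] by blast
  have cmono: "c k \<le> c (Suc k)" for k unfolding c_def using gam_props[OF b0 cnt] by blast
  have cinc: "k \<le> k' \<Longrightarrow> c k \<le> c k'" for k k'
    using lift_Suc_mono_le[of c, OF cmono] by blast
  have ccof: "\<beta> < \<alpha> \<Longrightarrow> \<exists>j. \<beta> \<le> c j" for \<beta> unfolding c_def using gam_props[OF b0 cnt] by blast
  have invc: "Inv u (c k)" for k using IH[OF clt] .
  have le: "x \<le> \<alpha>" if "1 \<le> n" "x \<in> u \<alpha> n" for n x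
  proof (cases "st u c n")
    case None then show ?thesis using that fx' by auto
  next
    case (Some k)
    then have "x = \<alpha> \<or> x \<in> u (c k) n" using that fx' by auto
    then show ?thesis using Inv_le[OF invc \<open>1 \<le> n\<close>] clt[of k] by fastforce
  qed
  have fin: "finite (u \<alpha> n)" if "1 \<le> n" for n
    using Inv_fin[OF invc that] by (auto simp: fx' split: option.split)
  have self: "\<alpha> \<in> u \<alpha> n" for n by (auto simp: fx' split: option.split)
  have crd: "card (u \<alpha> n) < n + 1" if "1 \<le> n" for n
  proof (cases "st u c n")
    case None then show ?thesis using that fx' by auto
  next
    case (Some k)
    then have "okk u c k n" using st_ok by blast
    then have "(card (u (c k) n) + 1) * (k + 1) \<le> n" unfolding okk_def by auto
    then have "card (u (c k) n) + 1 \<le> n" by (metis le_add1 mult.right_neutral mult_le_mono2 order_trans add.commute)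
    moreover have "card (u \<alpha> n) \<le> card (u (c k) n) + 1"
      using Some fx'[of n] card_insert_le_m1 Inv_fin[OF invc that]
      by (simp add: card_insert_if)
    ultimately show ?thesis by simp
  qed
  have mono: "u \<alpha> n \<subseteq> u \<alpha> (Suc n)" for n
  proof (cases "st u c n")
    case None then show ?thesis using self fx'[of n] by auto
  next
    case (Some k)
    have n1: "1 \<le> n" using st_ok[OF Some] by blast
    from st_step[OF Some] show ?thesis
    proof
      assume "st u c (Suc n) = Some k"
      then show ?thesis using Some fx'[of n] fx'[of "Suc n"] Inv_mono[OF invc n1, of "Suc n"] by auto
    next
      assume A: "st u c (Suc n) = Some (Suc k) \<and> c k \<in> u (c (Suc k)) (Suc n)"
      then have "u (c k) (Suc n) = u (c (Suc k)) (Suc n) \<inter> {y. y \<le> c k}"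
        using Inv_coh[OF invc[of "Suc k"], of "Suc n" "c k"] by simp
      then have "u (c k) n \<subseteq> u (c (Suc k)) (Suc n)"
        using Inv_mono[OF invc n1, of "Suc n" k] by auto
      then show ?thesis using Some A fx'[of n] fx'[of "Suc n"] by auto
    qed
  qed
  have monoI: "u \<alpha> n \<subseteq> u \<alpha> m" if "n \<le> m" for n m
    using lift_Suc_mono_le[of "u \<alpha>", OF mono that] .
  have coh: "u \<beta> n = u \<alpha> n \<inter> {y. y \<le> \<beta>}" if n1: "1 \<le> n" and b: "\<beta> \<in> u \<alpha> n" for n \<beta>
  proof (cases "\<beta> = \<alpha>")
    case True then show ?thesis using le[OF n1] by auto
  next
    case False
    then obtain k where Some: "st u c n = Some k" and bk: "\<beta> \<in> u (c k) n"
      using b fx'[of n] by (auto split: option.splits)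
    have "\<beta> \<le> c k" using Inv_le[OF invc n1 bk] .
    then have "\<not> \<alpha> \<le> \<beta>" using clt[of k] by auto
    then show ?thesis using Inv_coh[OF invc n1 bk] Some fx'[of n] by auto
  qed
  have un: "(\<Union>n\<in>{1..}. u \<alpha> n) = {\<beta>. \<beta> \<le> \<alpha>}"
  proof
    show "(\<Union>n\<in>{1..}. u \<alpha> n) \<subseteq> {\<beta>. \<beta> \<le> \<alpha>}" using le by auto
  next
    show "{\<beta>. \<beta> \<le> \<alpha>} \<subseteq> (\<Union>n\<in>{1..}. u \<alpha> n)"
    proof
      fix \<beta> assume "\<beta> \<in> {\<beta>. \<beta> \<le> \<alpha>}"
      then have "\<beta> = \<alpha> \<or> \<beta> < \<alpha>" by auto
      then show "\<beta> \<in> (\<Union>n\<in>{1..}. u \<alpha> n)"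
      proof
        assume "\<beta> = \<alpha>" then show ?thesis using self[of 1] by auto
      next
        assume "\<beta> < \<alpha>"
        then obtain j where "\<beta> \<le> c j" using ccof by blast
        obtain n k where nk: "k \<ge> j" "st u c n = Some k"
          using st_unbounded[of u c j, OF invc cmono] by blast
        have n1: "1 \<le> n" using st_ok[OF nk(2)] by blast
        have "\<beta> \<le> c k" using \<open>\<beta> \<le> c j\<close> cinc[OF nk(1)] by simp
        then obtain m where m: "m \<ge> 1" "\<beta> \<in> u (c k) m" using Inv_union[OF invc] by blast
        define M where "M = max n m"
        have M1: "1 \<le> M" using n1 unfolding M_def by simp
        have "\<beta> \<in> u (c k) M" using Inv_mono[OF invc m(1), of M] m(2) unfolding M_def by auto
        have "c k \<in> u (c k) n" using Inv_self[OF invc n1] .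
        then have "c k \<in> u \<alpha> n" using nk(2) fx'[of n] by auto
        then have "c k \<in> u \<alpha> M" using monoI[of n M] unfolding M_def by auto
        then have "u (c k) M = u \<alpha> M \<inter> {y. y \<le> c k}" using coh[OF M1] by blast
        then have "\<beta> \<in> u \<alpha> M" using \<open>\<beta> \<in> u (c k) M\<close> by auto
        then show ?thesis using M1 by auto
      qed
    qed
  qed
  have lim: "(\<lambda>n. real (card (u \<alpha> n)) / real (n + 1)) \<longlonglongrightarrow> 0"
  proof (rule LIMSEQ_I)
    fix r :: real assume "0 < r"
    obtain K :: nat where K: "1 / r < real K" using reals_Archimedean2 by blast
    obtain n0 k0 where nk: "k0 \<ge> K" "st u c n0 = Some k0"
      using st_unbounded[of u c K, OF invc cmono] by blast
    have "norm (real (card (u \<alpha> n)) / real (n + 1) - 0) < r" if nn0: "n \<ge> n0" for n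
    proof -
      obtain k where k: "k \<ge> k0" "st u c n = Some k" using st_later[OF nk(2) nn0] by blast
      have n1: "1 \<le> n" using st_ok[OF k(2)] by blast
      have "okk u c k n" using st_ok[OF k(2)] by blast
      then have A: "(card (u (c k) n) + 1) * (k + 1) \<le> n" unfolding okk_def by auto
      have B: "card (u \<alpha> n) \<le> card (u (c k) n) + 1"
        using k(2) fx'[of n] Inv_fin[OF invc n1] by (simp add: card_insert_if)
      have "card (u \<alpha> n) * (k + 1) \<le> n" using A B
        by (meson le_trans mult_le_mono1)
      then have C: "real (card (u \<alpha> n)) * (real k + 1) \<le> real n"
        by (metis of_nat_1 of_nat_add of_nat_le_iff of_nat_mult)
      have kr: "1 / r < real k + 1" using K nk(1) k(1) by linarith
      then have "1 < r * (real k + 1)" using \<open>0 < r\<close> by (simp add: field_simps)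
      have "real (card (u \<alpha> n)) * (real k + 1) < r * (real k + 1) * real (n + 1)"
      proof -
        have "real n < real (n+1)" by simp
        also have "real (n+1) \<le> r * (real k + 1) * real (n + 1)"
          using \<open>1 < r * (real k + 1)\<close> by simp
        finally show ?thesis using C by linarith
      qed
      then have "real (card (u \<alpha> n)) < r * real (n + 1)"
        by (smt (verit, ccfv_SIG) mult.commute mult.left_commute mult_less_cancel_left_pos of_nat_0_le_iff)
      then show ?thesis by (simp add: field_simps)
    qed
    then show "\<exists>no. \<forall>n\<ge>no. norm (real (card (u \<alpha> n)) / real (n + 1) - 0) < r" by blast
  qed
  show ?thesis unfolding Inv_def using fin crd self mono coh un lim by blast
qed


lemma Inv_single:
  fixes u :: "'a::wellorder \<Rightarrow> nat \<Rightarrow> 'a set"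
  assumes "\<And>n. u \<alpha> n = {\<alpha>}" "\<And>\<beta>. \<not> \<beta> < \<alpha>"
  shows "Inv u \<alpha>"
proof -
  have set: "{\<beta>. \<beta> \<le> \<alpha>} = {\<alpha>}"
    using assms by (auto simp: order.order_iff_strict)
  have "(\<lambda>n. inverse (real (Suc n))) \<longlonglongrightarrow> 0" by (rule LIMSEQ_inverse_real_of_nat)
  then have lim: "(\<lambda>n. real (card {\<alpha>}) / real (n + 1)) \<longlonglongrightarrow> 0"
    by (simp add: divide_inverse)
  show ?thesis unfolding Inv_def assms(1) set using lim assms(1) by auto
qed

theorem mainTheorem2:
  assumes "uncountable (UNIV :: 'a::wellorder set)"
    and "\<And>a::'a. countable {x. x < a}"
  shows "\<exists>u :: 'a \<Rightarrow> nat \<Rightarrow> 'a set.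
    \<forall>\<alpha>. (\<forall>n\<ge>1.
        finite (u \<alpha> n) \<and>
        card (u \<alpha> n) < n + 1 \<and>
        \<alpha> \<in> u \<alpha> n \<and> u \<alpha> n \<subseteq> u \<alpha> (Suc n) \<and>
        (\<forall>\<beta>\<in>u \<alpha> n. u \<beta> n = u \<alpha> n \<inter> {\<gamma>. \<gamma> \<le> \<beta>})) \<and>
      (\<Union>n\<in>{1..}. u \<alpha> n) = {\<beta>. \<beta> \<le> \<alpha>} \<and>
      (\<lambda>n. real (card (u \<alpha> n)) / real (n + 1)) \<longlonglongrightarrow> 0"
proof -
  define R where "R = {(x::'a, y). x < y}"
  define u where "u = wfrec R H"
  have wfR: "wf R" unfolding R_def by (rule wf)
  have fx: "u \<alpha> = H u \<alpha>" for \<alpha>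
  proof -
    have "u \<alpha> = H (cut u R \<alpha>) \<alpha>" unfolding u_def using wfrec[OF wfR] .
    also have "\<dots> = H u \<alpha>"
    proof -
      have "(\<lambda>\<beta>. if \<beta> < \<alpha> then cut u R \<alpha> \<beta> else (\<lambda>_. {})) = (\<lambda>\<beta>. if \<beta> < \<alpha> then u \<beta> else (\<lambda>_. {}))"
        by (auto simp: cut_apply R_def)
      then show ?thesis unfolding H_def by simp
    qed
    finally show ?thesis .
  qed
  have "Inv u \<alpha>" for \<alpha>
  proof (induction \<alpha> rule: less_induct)
    case (less \<alpha>)
    define g' where "g' = (\<lambda>\<beta>. if \<beta> < \<alpha> then u \<beta> else (\<lambda>_. {}))"
    have H': "u \<alpha> n = (case st g' (gam \<alpha>) n of None \<Rightarrow> {\<alpha>} | Some k \<Rightarrow> insert \<alpha> (g' (gam \<alpha> k) n))" for n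
      using fx[of \<alpha>] unfolding H_def H0_def g'_def by simp
    show ?case
    proof (cases "\<exists>b0. b0 < \<alpha>")
      case True
      then obtain b0 where b0: "b0 < \<alpha>" by blast
      have lt: "gam \<alpha> k < \<alpha>" for k using gam_props[OF b0 assms(2)] by blast
      have eq: "g' (gam \<alpha> k) = u (gam \<alpha> k)" for k using lt unfolding g'_def by simp
      have "u \<alpha> n = (case st u (gam \<alpha>) n of None \<Rightarrow> {\<alpha>} | Some k \<Rightarrow> insert \<alpha> (u (gam \<alpha> k) n))" for n
        using H'[of n] st_cong[of g' "gam \<alpha>" u n, OF eq] eq by (simp split: option.split)
      then show ?thesis using step_A[of u \<alpha> b0] less b0 assms(2) by blast
    next
      case False
      have "u \<alpha> n = {\<alpha>}" for n using H'[of n] False unfolding g'_def by (auto split: option.split)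
      then show ?thesis using Inv_single False by blast
    qed
  qed
  then show ?thesis unfolding Inv_def by blast
qed

end
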